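(* Let $\mathcal{H}$ be a complex Hilbert space, let $V_1,V_2\in\mathcal{B}(\mathcal{H})$ be isometries and let $Q\in\mathcal{B}(\mathcal{H})$ be a unitary such that $V_2V_1=QV_1V_2$. Then there exist a Hilbert space $\mathcal{K}\supseteq\mathcal{H}$ and unitaries $\overline{Q},U_1,U_2\in\mathcal{B}(\mathcal{K})$, with $\mathcal{H}$ reducing $\overline{Q}$ and $\overline{Q}|_{\mathcal{H}}=Q$, such that (i) $U_2U_1=\overline{Q}U_1U_2$; and (ii) $U_i$ is an extension of $V_i$ for $i=1,2$, so that $V_1^nV_2^m=P_{\mathcal{H}}U_1^nU_2^m|_{\mathcal{H}}$ and $V_2^nV_1^m=P_{\mathcal{H}}U_2^nU_1^m|_{\mathcal{H}}$ for all integers $n,m\geq 0$. In fact, given any $q\in\mathbb{T}$, one can choose $\overline{Q}=Q\oplus qI_{\mathcal{K}\ominus\mathcal{H}}$.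
   Context: $S\in\mathcal{B}(\mathcal{K})$ is an extension of $T\in\mathcal{B}(\mathcal{H})$ ($\mathcal{H}\subseteq\mathcal{K}$) if $Sh=Th$ for all $h\in\mathcal{H}$. $\mathbb{T}$ is the unit circle; $P_{\mathcal{H}}$ the orthogonal projection onto $\mathcal{H}$. *)

theory Defs
  imports "HOL-Analysis.Analysis"
begin

class chilbert_space = real_normed_vector + complete_space +
  fixes scaleC :: "complex \<Rightarrow> 'a \<Rightarrow> 'a" (infixr \<open>*\<^sub>C\<close> 75)
  fixes cinner :: "'a \<Rightarrow> 'a \<Rightarrow> complex"
  assumes scaleC_add_right: "a *\<^sub>C (x + y) = a *\<^sub>C x + a *\<^sub>C y"
    and scaleC_add_left: "(a + b) *\<^sub>C x = a *\<^sub>C x + b *\<^sub>C x"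
    and scaleC_scaleC: "a *\<^sub>C (b *\<^sub>C x) = (a * b) *\<^sub>C x"
    and scaleC_one: "1 *\<^sub>C x = x"
    and scaleR_scaleC: "scaleR r x = complex_of_real r *\<^sub>C x"
    and norm_scaleC: "norm (a *\<^sub>C x) = cmod a * norm x"
    and cinner_commute: "cinner x y = cnj (cinner y x)"
    and cinner_add_left: "cinner (x + y) z = cinner x z + cinner y z"
    and cinner_scaleC_left: "cinner (r *\<^sub>C x) y = cnj r * cinner x y"
    and cinner_self_real_nonneg: "Im (cinner x x) = 0 \<and> 0 \<le> Re (cinner x x)"
    and cinner_eq_zero_iff: "cinner x x = 0 \<longleftrightarrow> x = 0"
    and norm_eq_sqrt_cinner: "norm x = sqrt (Re (cinner x x))"

definition cblinear :: "('a::chilbert_space \<Rightarrow> 'b::chilbert_space) \<Rightarrow> bool" where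
  "cblinear T \<longleftrightarrow> bounded_linear T \<and> (\<forall>c x. T (c *\<^sub>C x) = c *\<^sub>C T x)"

definition isometry_op :: "('a::chilbert_space \<Rightarrow> 'a) \<Rightarrow> bool" where
  "isometry_op V \<longleftrightarrow> cblinear V \<and> (\<forall>x. norm (V x) = norm x)"

definition unitary_op :: "('a::chilbert_space \<Rightarrow> 'a) \<Rightarrow> bool" where
  "unitary_op U \<longleftrightarrow> isometry_op U \<and> surj U"

text \<open>The dilation space K is realised as a closed subspace of the Hilbert space
  l2(N,H) of square-summable H-valued sequences; H is identified with the
  subspace of sequences supported at index 0 via emb.\<close>

definition l2 :: "(nat \<Rightarrow> 'a::chilbert_space) set" where
  "l2 = {f. summable (\<lambda>n. (norm (f n))\<^sup>2)}"

definition l2norm :: "(nat \<Rightarrow> 'a::chilbert_space) \<Rightarrow> real" where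
  "l2norm f = sqrt (\<Sum>n. (norm (f n))\<^sup>2)"

definition emb :: "'a::chilbert_space \<Rightarrow> nat \<Rightarrow> 'a" where
  "emb h = (\<lambda>n. if n = 0 then h else 0)"

text \<open>The orthogonal projection P_H of l2(N,H) onto (the copy of) H, read back in H.\<close>
definition projH :: "(nat \<Rightarrow> 'a::chilbert_space) \<Rightarrow> 'a" where
  "projH f = f 0"

definition closed_subspace_l2 :: "(nat \<Rightarrow> 'a::chilbert_space) set \<Rightarrow> bool" where
  "closed_subspace_l2 K \<longleftrightarrow>
     K \<subseteq> l2 \<and> (\<lambda>n. 0) \<in> K \<and>
     (\<forall>f\<in>K. \<forall>g\<in>K. (\<lambda>n. f n + g n) \<in> K) \<and>
     (\<forall>c. \<forall>f\<in>K. (\<lambda>n. c *\<^sub>C f n) \<in> K) \<and>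
     (\<forall>x f. (\<forall>k. x k \<in> K) \<longrightarrow> f \<in> l2 \<longrightarrow>
        (\<lambda>k. l2norm (\<lambda>n. x k n - f n)) \<longlonglongrightarrow> 0 \<longrightarrow> f \<in> K)"

definition unitary_on :: "(nat \<Rightarrow> 'a::chilbert_space) set \<Rightarrow>
    ((nat \<Rightarrow> 'a) \<Rightarrow> (nat \<Rightarrow> 'a)) \<Rightarrow> bool" where
  "unitary_on K U \<longleftrightarrow>
     U ` K = K \<and>
     (\<forall>f\<in>K. \<forall>g\<in>K. U (\<lambda>n. f n + g n) = (\<lambda>n. U f n + U g n)) \<and>
     (\<forall>c. \<forall>f\<in>K. U (\<lambda>n. c *\<^sub>C f n) = (\<lambda>n. c *\<^sub>C U f n)) \<and>
     (\<forall>f\<in>K. l2norm (U f) = l2norm f)"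

end

theory Submission
  imports Defs
begin


lemma scaleC_zero_left[simp]: "0 *\<^sub>C (x::'a::chilbert_space) = 0"
proof -
  have "(0 + 0) *\<^sub>C x = 0 *\<^sub>C x + 0 *\<^sub>C x" by (rule scaleC_add_left)
  then show ?thesis by simp
qed

lemma scaleC_zero_right[simp]: "c *\<^sub>C (0::'a::chilbert_space) = 0"
proof -
  have "c *\<^sub>C (0 + 0::'a) = c *\<^sub>C 0 + c *\<^sub>C 0" by (rule scaleC_add_right)
  then show ?thesis by simp
qed

lemma scaleC_minus_right: "c *\<^sub>C (- x::'a::chilbert_space) = - (c *\<^sub>C x)"
proof -
  have "c *\<^sub>C (x + - x) = c *\<^sub>C x + c *\<^sub>C (- x)" by (rule scaleC_add_right)
  then have "c *\<^sub>C x + c *\<^sub>C (- x) = 0" by simp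
  then show ?thesis by (simp add: eq_neg_iff_add_eq_0 add.commute)
qed

lemma scaleC_diff_right: "c *\<^sub>C (x - y::'a::chilbert_space) = c *\<^sub>C x - c *\<^sub>C y"
  using scaleC_add_right[of c x "- y"] scaleC_minus_right[of c y] by simp

lemma scaleC_one'[simp]: "1 *\<^sub>C (x::'a::chilbert_space) = x"
  by (rule scaleC_one)

definition ri :: "'a::chilbert_space \<Rightarrow> 'a \<Rightarrow> real" where
  "ri x y = Re (cinner x y)"

lemma ri_sym: "ri x y = ri y x"
  unfolding ri_def by (subst cinner_commute) simp

lemma ri_add_left: "ri (x + y) z = ri x z + ri y z"
  unfolding ri_def by (simp add: cinner_add_left)

lemma ri_add_right: "ri z (x + y) = ri z x + ri z y"
  using ri_add_left ri_sym by metis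

lemma ri_scaleR_left: "ri (r *\<^sub>R x) y = r * ri x y"
  unfolding ri_def scaleR_scaleC cinner_scaleC_left by simp

lemma ri_scaleR_right: "ri y (r *\<^sub>R x) = r * ri y x"
  using ri_scaleR_left ri_sym by metis

lemma ri_minus_left: "ri (- x) y = - ri x y"
  using ri_scaleR_left[of "-1" x y] by simp

lemma ri_minus_right: "ri y (- x) = - ri y x"
  using ri_scaleR_right[of y "-1" x] by simp

lemma ri_diff_left: "ri (x - y) z = ri x z - ri y z"
  using ri_add_left[of x "- y" z] ri_minus_left[of y z] by simp

lemma ri_diff_right: "ri z (x - y) = ri z x - ri z y"
  using ri_add_right[of z x "- y"] ri_minus_right[of z y] by simp

lemma ri_zero_left[simp]: "ri 0 y = 0"
  using ri_scaleR_left[of 0 y y] by simp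

lemma ri_zero_right[simp]: "ri y 0 = 0"
  using ri_scaleR_right[of y 0 y] by simp

lemma norm_sq_ri: "(norm (x::'a::chilbert_space))\<^sup>2 = ri x x"
proof -
  have "0 \<le> Re (cinner x x)" using cinner_self_real_nonneg[of x] by simp
  then show ?thesis unfolding norm_eq_sqrt_cinner[of x] ri_def by simp
qed

lemma norm_add_sq: "(norm (x + y::'a::chilbert_space))\<^sup>2
   = (norm x)\<^sup>2 + (norm y)\<^sup>2 + 2 * ri x y"
proof -
  have "ri (x + y) (x + y) = ri x x + ri x y + ri y x + ri y y"
    by (simp add: ri_add_left ri_add_right)
  then show ?thesis using norm_sq_ri[of "x+y"] norm_sq_ri[of x] norm_sq_ri[of y] ri_sym[of x y]
    by linarith
qed

lemma norm_diff_sq: "(norm (x - y::'a::chilbert_space))\<^sup>2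
   = (norm x)\<^sup>2 + (norm y)\<^sup>2 - 2 * ri x y"
  using norm_add_sq[of x "- y"] ri_minus_right[of x y] by simp

lemma pythag: "ri x y = 0 \<Longrightarrow> (norm (x + y::'a::chilbert_space))\<^sup>2 = (norm x)\<^sup>2 + (norm y)\<^sup>2"
  using norm_add_sq[of x y] by simp

lemma polar: "4 * ri x y = (norm (x + y::'a::chilbert_space))\<^sup>2 - (norm (x - y))\<^sup>2"
  using norm_add_sq[of x y] norm_diff_sq[of x y] by linarith

lemma ri_scaleC_both: "ri (c *\<^sub>C x) (c *\<^sub>C y) = (cmod c)\<^sup>2 * ri (x::'a::chilbert_space) y"
proof -
  have "4 * ri (c *\<^sub>C x) (c *\<^sub>C y) = (norm (c *\<^sub>C (x + y)))\<^sup>2 - (norm (c *\<^sub>C (x - y)))\<^sup>2"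
    using polar[of "c *\<^sub>C x" "c *\<^sub>C y"] by (simp add: scaleC_add_right scaleC_diff_right)
  also have "\<dots> = (cmod c)\<^sup>2 * ((norm (x + y))\<^sup>2 - (norm (x - y))\<^sup>2)"
    by (simp add: norm_scaleC power_mult_distrib algebra_simps)
  also have "\<dots> = (cmod c)\<^sup>2 * (4 * ri x y)" using polar[of x y] by simp
  finally show ?thesis by simp
qed

lemma ri_self_zero: "ri x x = 0 \<Longrightarrow> (x::'a::chilbert_space) = 0"
  using norm_sq_ri[of x] by simp

lemma parallelogram: "(norm (x - y::'a::chilbert_space))\<^sup>2 + (norm (x + y))\<^sup>2 = 2 * (norm x)\<^sup>2 + 2 * (norm y)\<^sup>2"
  using norm_add_sq[of x y] norm_diff_sq[of x y] by linarith

lemma scaleC_inv: "c \<noteq> 0 \<Longrightarrow> c *\<^sub>C (inverse c *\<^sub>C (x::'a::chilbert_space)) = x"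
  by (simp add: scaleC_scaleC)


lemma iso_bl: "isometry_op W \<Longrightarrow> bounded_linear W"
  unfolding isometry_op_def cblinear_def by simp
lemma iso_norm: "isometry_op W \<Longrightarrow> norm (W x) = norm x"
  unfolding isometry_op_def by simp
lemma iso_scaleC: "isometry_op W \<Longrightarrow> W (c *\<^sub>C x) = c *\<^sub>C W x"
  unfolding isometry_op_def cblinear_def by simp
lemma iso_add: "isometry_op W \<Longrightarrow> W (x + y) = W x + W y"
  using iso_bl linear_add bounded_linear.linear by blast
lemma iso_diff: "isometry_op W \<Longrightarrow> W (x - y) = W x - W y"
  using iso_bl linear_diff bounded_linear.linear by blast
lemma iso_zero: "isometry_op W \<Longrightarrow> W 0 = 0"
  using iso_bl linear_0 bounded_linear.linear by blast
lemma iso_scaleR: "isometry_op W \<Longrightarrow> W (r *\<^sub>R x) = r *\<^sub>R W x"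
  using iso_bl linear_scale bounded_linear.linear by blast
lemma iso_inj: "isometry_op W \<Longrightarrow> W x = W y \<Longrightarrow> x = y"
  using iso_diff[of W x y] iso_norm[of W "x - y"] by simp
lemma iso_comp: "isometry_op A \<Longrightarrow> isometry_op B \<Longrightarrow> isometry_op (\<lambda>x. A (B x))"
  unfolding isometry_op_def cblinear_def
  using bounded_linear_compose[of A B] by (auto simp: o_def)

lemma proj_exists:
  fixes W :: "'a::chilbert_space \<Rightarrow> 'a"
  assumes W: "isometry_op W"
  shows "\<exists>a. \<forall>b. ri (W b) (x - W a) = 0"
proof -
  define F where "F = (\<lambda>a. (norm (x - W a))\<^sup>2)"
  define d where "d = Inf (range F)"
  have bdd: "bdd_below (range F)" unfolding F_def by (rule bdd_belowI[of _ 0]) auto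
  have dle: "d \<le> F a" for a unfolding d_def using bdd by (simp add: cINF_lower)
  have "\<exists>a. F a < d + 1 / real (Suc n)" for n
  proof -
    have "Inf (range F) < d + 1 / real (Suc n)" unfolding d_def by simp
    then show ?thesis using cInf_lessD[of "range F"] by blast
  qed
  then obtain a where a: "\<And>n. F (a n) < d + 1 / real (Suc n)" by metis
  have key: "(norm (a n - a m))\<^sup>2 \<le> 2 / real (Suc n) + 2 / real (Suc m)" for n m
  proof -
    define u where "u = x - W (a n)"
    define v where "v = x - W (a m)"
    define c where "c = (1/2::real) *\<^sub>R (a n + a m)"
    have "u + v = 2 *\<^sub>R (x - W c)"
      unfolding u_def v_def c_def using iso_scaleR[OF W] iso_add[OF W]
      by (simp add: algebra_simps scaleR_2)
    then have uv: "(norm (u + v))\<^sup>2 = 4 * F c" unfolding F_def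
      by (simp add: power_mult_distrib)
    have "u - v = W (a m - a n)" unfolding u_def v_def using iso_diff[OF W] by simp
    then have "(norm (u - v))\<^sup>2 = (norm (a n - a m))\<^sup>2"
      using iso_norm[OF W] by (simp add: norm_minus_commute)
    moreover have "(norm (u - v))\<^sup>2 + (norm (u + v))\<^sup>2 = 2 * (norm u)\<^sup>2 + 2 * (norm v)\<^sup>2"
      by (rule parallelogram)
    moreover have "(norm u)\<^sup>2 < d + 1 / real (Suc n)" using a[of n] unfolding F_def u_def .
    moreover have "(norm v)\<^sup>2 < d + 1 / real (Suc m)" using a[of m] unfolding F_def v_def .
    moreover have "d \<le> F c" by (rule dle)
    ultimately show ?thesis using uv by linarith
  qed
  have "Cauchy a"
  proof (rule metric_CauchyI)
    fix e :: real assume e: "e > 0"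
    obtain N where N: "4 / real (Suc N) < e\<^sup>2"
    proof -
      obtain N where "inverse (real (Suc N)) < e\<^sup>2 / 4" using reals_Archimedean e
        by (metis zero_less_power divide_pos_pos zero_less_numeral)
      then show ?thesis using that[of N] by (simp add: field_simps)
    qed
    show "\<exists>M. \<forall>m\<ge>M. \<forall>n\<ge>M. dist (a m) (a n) < e"
    proof (intro exI allI impI)
      fix m n assume mn: "N \<le> m" "N \<le> n"
      have "2 / real (Suc m) \<le> 2 / real (Suc N)" using mn by (simp add: frac_le)
      moreover have "2 / real (Suc n) \<le> 2 / real (Suc N)" using mn by (simp add: frac_le)
      ultimately have "(norm (a m - a n))\<^sup>2 < e\<^sup>2" using key[of m n] N by linarith
      then have "norm (a m - a n) < e" using e by (simp add: power_less_imp_less_base)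
      then show "dist (a m) (a n) < e" by (simp add: dist_norm)
    qed
  qed
  then obtain a0 where lim: "a \<longlonglongrightarrow> a0" using Cauchy_convergent_iff convergent_def by blast
  have "(\<lambda>n. F (a n)) \<longlonglongrightarrow> F a0" unfolding F_def
    by (intro tendsto_intros bounded_linear.tendsto[OF iso_bl[OF W]] lim)
  moreover have "(\<lambda>n. d + 1 / real (Suc n)) \<longlonglongrightarrow> d + 0"
    by (intro tendsto_intros LIMSEQ_inverse_real_of_nat[unfolded inverse_eq_divide])
  ultimately have "F a0 \<le> d + 0" using a by (intro LIMSEQ_le) (auto intro: less_imp_le)
  then have min: "F a0 \<le> F b" for b using dle[of b] by simp
  show ?thesis
  proof (intro exI allI)
    fix b
    define z where "z = x - W a0"
    define c where "c = ri (W b) z"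
    define N where "N = (norm (W b))\<^sup>2"
    define t where "t = c / (N + 1)"
    have N0: "N \<ge> 0" unfolding N_def by simp
    have "x - W (a0 + t *\<^sub>R b) = z - t *\<^sub>R W b"
      unfolding z_def using iso_add[OF W] iso_scaleR[OF W] by simp
    then have "F (a0 + t *\<^sub>R b) = (norm z)\<^sup>2 + t\<^sup>2 * N - 2 * t * c"
      unfolding F_def N_def c_def
      by (simp add: norm_diff_sq ri_scaleR_right ri_sym[of z] power_mult_distrib)
    moreover have "F a0 = (norm z)\<^sup>2" unfolding F_def z_def ..
    ultimately have "0 \<le> t\<^sup>2 * N - 2 * t * c" using min[of "a0 + t *\<^sub>R b"] by linarith
    moreover have "t\<^sup>2 * N - 2 * t * c = (c\<^sup>2 * N - 2 * c\<^sup>2 * (N + 1)) / (N+1)\<^sup>2"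
    proof -
      define s where "s = N + 1"
      have s0: "s \<noteq> 0" using N0 unfolding s_def by simp
      have e1: "t = c / s" unfolding t_def s_def ..
      have e2: "N = s - 1" unfolding s_def by simp
      have "t\<^sup>2 * N - 2 * t * c = (c\<^sup>2 * (s - 1) - 2 * c\<^sup>2 * s) / s\<^sup>2"
        unfolding e1 e2 using s0 by (simp add: field_simps power2_eq_square)
      then show ?thesis unfolding s_def by simp
    qed
    ultimately have "0 \<le> (c\<^sup>2 * N - 2 * c\<^sup>2 * (N + 1)) / (N+1)\<^sup>2" by simp
    moreover have "(N+1)\<^sup>2 > 0" using N0 by simp
    ultimately have "0 \<le> c\<^sup>2 * N - 2 * c\<^sup>2 * (N + 1)"
      by (simp add: zero_le_divide_iff)
    then have "c\<^sup>2 * (N + 2) \<le> 0" by (simp add: algebra_simps)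
    then have "c\<^sup>2 \<le> 0" using N0
      by (metis add_nonneg_pos mult_le_0_iff not_le zero_less_numeral zero_le_power2 order_antisym_conv)
    then show "ri (W b) (x - W a0) = 0" unfolding c_def z_def by simp
  qed
qed


definition perp :: "('a::chilbert_space \<Rightarrow> 'a) \<Rightarrow> 'a \<Rightarrow> bool" where
  "perp W d \<longleftrightarrow> (\<forall>b. ri (W b) d = 0)"

definition Ws :: "('a::chilbert_space \<Rightarrow> 'a) \<Rightarrow> 'a \<Rightarrow> 'a" where
  "Ws W x = (SOME a. perp W (x - W a))"

context
  fixes W :: "'a::chilbert_space \<Rightarrow> 'a"
  assumes W: "isometry_op W"
begin

lemma Ws_perp: "perp W (x - W (Ws W x))"
  unfolding Ws_def perp_def using proj_exists[OF W, of x] by (rule someI_ex)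

lemma perp_add: "perp W x \<Longrightarrow> perp W y \<Longrightarrow> perp W (x + y)"
  unfolding perp_def by (simp add: ri_add_right)

lemma perp_diff: "perp W x \<Longrightarrow> perp W y \<Longrightarrow> perp W (x - y)"
  unfolding perp_def by (simp add: ri_diff_right)

lemma perp_zero: "perp W 0"
  unfolding perp_def by simp

lemma perp_scaleC: "perp W x \<Longrightarrow> perp W (c *\<^sub>C x)"
proof (cases "c = 0")
  case True then show ?thesis by (simp add: perp_zero)
next
  case False
  assume p: "perp W x"
  show ?thesis unfolding perp_def
  proof
    fix b
    have "W b = c *\<^sub>C W (inverse c *\<^sub>C b)" using False iso_scaleC[OF W] by (simp add: scaleC_inv)
    then have "ri (W b) (c *\<^sub>C x) = (cmod c)\<^sup>2 * ri (W (inverse c *\<^sub>C b)) x"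
      by (simp add: ri_scaleC_both)
    then show "ri (W b) (c *\<^sub>C x) = 0" using p unfolding perp_def by simp
  qed
qed

lemma perp_W: "perp W (W a) \<Longrightarrow> W a = 0"
  unfolding perp_def using ri_self_zero by blast

lemma Ws_unique: "perp W (x - W a) \<Longrightarrow> Ws W x = a"
proof -
  assume p: "perp W (x - W a)"
  have "perp W ((x - W a) - (x - W (Ws W x)))" by (rule perp_diff[OF p Ws_perp])
  moreover have "(x - W a) - (x - W (Ws W x)) = W (Ws W x - a)" using iso_diff[OF W] by simp
  ultimately have "W (Ws W x - a) = 0" using perp_W by simp
  then have "Ws W x - a = 0" using iso_norm[OF W, of "Ws W x - a"] by simp
  then show ?thesis by simp
qed

lemma Ws_Wplus: "perp W d \<Longrightarrow> Ws W (W a + d) = a"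
  by (rule Ws_unique) simp

lemma Ws_W: "Ws W (W a) = a"
  by (rule Ws_unique) (simp add: perp_zero)

lemma Ws_perp0: "perp W d \<Longrightarrow> Ws W d = 0"
  by (rule Ws_unique) (simp add: iso_zero[OF W])

lemma Ws_add: "Ws W (x + y) = Ws W x + Ws W y"
proof (rule Ws_unique)
  have eq: "x + y - W (Ws W x + Ws W y) = (x - W (Ws W x)) + (y - W (Ws W y))"
    using iso_add[OF W, of "Ws W x" "Ws W y"] by (simp add: algebra_simps)
  show "perp W (x + y - W (Ws W x + Ws W y))" unfolding eq by (rule perp_add[OF Ws_perp Ws_perp])
qed

lemma Ws_scaleC: "Ws W (c *\<^sub>C x) = c *\<^sub>C Ws W x"
proof (rule Ws_unique)
  have "c *\<^sub>C x - W (c *\<^sub>C Ws W x) = c *\<^sub>C (x - W (Ws W x))"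
    using iso_scaleC[OF W] by (simp add: scaleC_diff_right)
  then show "perp W (c *\<^sub>C x - W (c *\<^sub>C Ws W x))" using perp_scaleC[OF Ws_perp] by simp
qed

lemma Ws_zero: "Ws W 0 = 0"
  using Ws_perp0 perp_zero by blast

lemma Ws_diff: "Ws W (x - y) = Ws W x - Ws W y"
  using Ws_add[of "x - y" y] by simp

lemma Ws_pyth: "(norm (Ws W x))\<^sup>2 + (norm (x - W (Ws W x)))\<^sup>2 = (norm x)\<^sup>2"
proof -
  have "ri (W (Ws W x)) (x - W (Ws W x)) = 0" using Ws_perp unfolding perp_def by blast
  then have "(norm (W (Ws W x) + (x - W (Ws W x))))\<^sup>2 = (norm (W (Ws W x)))\<^sup>2 + (norm (x - W (Ws W x)))\<^sup>2"
    by (rule pythag)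
  then show ?thesis using iso_norm[OF W] by simp
qed

lemma Ws_norm_le: "norm (Ws W x) \<le> norm x"
  using Ws_pyth[of x] by (smt (verit) norm_ge_zero power2_le_imp_le zero_le_power2)

lemma perp_closed:
  assumes lim: "X \<longlonglongrightarrow> d" and p: "\<And>k. perp W (X k)"
  shows "perp W d"
proof -
  have eq: "Ws W d = Ws W (d - X k)" for k
    using Ws_diff[of d "X k"] Ws_perp0[OF p[of k]] by simp
  have "(\<lambda>k. d - X k) \<longlonglongrightarrow> d - d" using lim by (intro tendsto_diff tendsto_const)
  then have "(\<lambda>k. d - X k) \<longlonglongrightarrow> 0" by simp
  then have "(\<lambda>k. norm (d - X k)) \<longlonglongrightarrow> 0" by (simp add: tendsto_norm_zero)
  moreover have "norm (Ws W d) \<le> norm (d - X k)" for k using eq[of k] Ws_norm_le by simp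
  ultimately have "norm (Ws W d) \<le> 0"
    by (intro LIMSEQ_le[OF tendsto_const]) auto
  then have "Ws W d = 0" by simp
  then show ?thesis using Ws_perp[of d] iso_zero[OF W] by simp
qed

end


lemma l2_iff: "f \<in> l2 \<longleftrightarrow> summable (\<lambda>n. (norm (f n))\<^sup>2)"
  by (simp add: l2_def)

lemma l2_mono: "g \<in> l2 \<Longrightarrow> (\<And>n. norm (f n) \<le> C * norm (g n)) \<Longrightarrow> f \<in> l2"
proof -
  assume g: "g \<in> l2" and le: "\<And>n. norm (f n) \<le> C * norm (g n)"
  have "summable (\<lambda>n. C\<^sup>2 * (norm (g n))\<^sup>2)" using g unfolding l2_iff by (rule summable_mult)
  moreover have "norm ((norm (f n))\<^sup>2) \<le> C\<^sup>2 * (norm (g n))\<^sup>2" for n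
  proof -
    have "(norm (f n))\<^sup>2 \<le> (C * norm (g n))\<^sup>2" by (rule power_mono[OF le[of n]]) simp
    then show ?thesis by (simp add: power_mult_distrib)
  qed
  ultimately show "f \<in> l2" unfolding l2_iff by (rule summable_comparison_test'[where N=0])
qed

lemma l2_zero: "(\<lambda>n. 0) \<in> l2"
  unfolding l2_iff by simp

lemma sq_add_le: "(norm (a + b::'a::real_normed_vector))\<^sup>2 \<le> 2 * (norm a)\<^sup>2 + 2 * (norm b)\<^sup>2"
proof -
  have "norm (a + b) \<le> norm a + norm b" by (rule norm_triangle_ineq)
  then have "(norm (a + b))\<^sup>2 \<le> (norm a + norm b)\<^sup>2" by (simp add: power_mono)
  also have "\<dots> \<le> 2 * (norm a)\<^sup>2 + 2 * (norm b)\<^sup>2"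
    using power2_sum[of "norm a" "norm b"] power2_diff[of "norm a" "norm b"]
      zero_le_power2[of "norm a - norm b"] by linarith
  finally show ?thesis .
qed

lemma l2_add: "f \<in> l2 \<Longrightarrow> g \<in> l2 \<Longrightarrow> (\<lambda>n. f n + g n) \<in> l2"
proof -
  assume f: "f \<in> l2" and g: "g \<in> l2"
  have "summable (\<lambda>n. 2 * (norm (f n))\<^sup>2 + 2 * (norm (g n))\<^sup>2)"
    using f g unfolding l2_iff by (intro summable_add summable_mult)
  then show ?thesis unfolding l2_iff
    by (rule summable_comparison_test'[where N=0]) (simp add: sq_add_le)
qed

lemma l2_minus: "f \<in> l2 \<Longrightarrow> (\<lambda>n. - f n) \<in> l2"
  unfolding l2_iff by simp

lemma l2_diff: "f \<in> l2 \<Longrightarrow> g \<in> l2 \<Longrightarrow> (\<lambda>n. f n - g n) \<in> l2"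
  using l2_add[of f "\<lambda>n. - g n"] l2_minus[of g] by simp

lemma l2_scaleC: "f \<in> l2 \<Longrightarrow> (\<lambda>n. c *\<^sub>C (f n::'a::chilbert_space)) \<in> l2"
proof -
  assume f: "f \<in> l2"
  show ?thesis by (rule l2_mono[where C="cmod c", OF f]) (metis norm_scaleC order_refl)
qed

lemma l2_finite: "(\<And>j. j > N \<Longrightarrow> f j = 0) \<Longrightarrow> f \<in> l2"
  unfolding l2_iff by (rule summable_finite[of "{..N}"]) auto

lemma l2norm_nonneg: "f \<in> l2 \<Longrightarrow> l2norm f \<ge> 0"
  unfolding l2norm_def l2_iff by (simp add: suminf_nonneg)

lemma l2norm_sq: "f \<in> l2 \<Longrightarrow> (l2norm f)\<^sup>2 = (\<Sum>n. (norm (f n))\<^sup>2)"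
  unfolding l2norm_def l2_iff by (simp add: suminf_nonneg)

lemma l2norm_coord: "f \<in> l2 \<Longrightarrow> norm (f j) \<le> l2norm f"
proof -
  assume f: "f \<in> l2"
  have "sum (\<lambda>n. (norm (f n))\<^sup>2) {j} \<le> (\<Sum>n. (norm (f n))\<^sup>2)"
    using f unfolding l2_iff by (intro sum_le_suminf) auto
  then have "(norm (f j))\<^sup>2 \<le> (l2norm f)\<^sup>2" using l2norm_sq[OF f] by simp
  then show ?thesis using power2_le_imp_le l2norm_nonneg[OF f] by blast
qed

lemma l2norm_eq0: "f \<in> l2 \<Longrightarrow> l2norm f = 0 \<Longrightarrow> f = (\<lambda>n. 0)"
proof
  fix j assume "f \<in> l2" "l2norm f = 0"
  then show "f j = 0" using l2norm_coord[of f j] by simp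
qed

lemma l2norm_le_sum: "f \<in> l2 \<Longrightarrow> (\<Sum>n<N. (norm (f n))\<^sup>2) \<le> (l2norm f)\<^sup>2"
  unfolding l2norm_sq by (rule sum_le_suminf) (auto simp: l2_iff)

lemma l2norm_le_of_partial:
  assumes "f \<in> l2" "\<And>N. (\<Sum>n<N. (norm (f n))\<^sup>2) \<le> B\<^sup>2" "B \<ge> 0"
  shows "l2norm f \<le> B"
proof -
  have "(l2norm f)\<^sup>2 \<le> B\<^sup>2" unfolding l2norm_sq[OF assms(1)]
    using assms(1) unfolding l2_iff by (intro suminf_le_const assms(2))
  then show ?thesis using power2_le_imp_le assms(3) by blast
qed

lemma l2norm_triangle:
  assumes f: "f \<in> l2" and g: "g \<in> l2"
  shows "l2norm (\<lambda>n. f n + g n) \<le> l2norm f + l2norm g"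
proof (rule l2norm_le_of_partial[OF l2_add[OF f g]])
  fix N
  have "L2_set (\<lambda>n. norm (f n + g n)) {..<N} \<le> L2_set (\<lambda>n. norm (f n) + norm (g n)) {..<N}"
    by (rule L2_set_mono) (auto simp: norm_triangle_ineq)
  also have "\<dots> \<le> L2_set (\<lambda>n. norm (f n)) {..<N} + L2_set (\<lambda>n. norm (g n)) {..<N}"
    by (rule L2_set_triangle_ineq)
  also have "L2_set (\<lambda>n. norm (f n)) {..<N} \<le> l2norm f"
    unfolding L2_set_def using l2norm_le_sum[OF f, of N] l2norm_nonneg[OF f]
    by (simp add: real_le_lsqrt)
  also have "L2_set (\<lambda>n. norm (g n)) {..<N} \<le> l2norm g"
    unfolding L2_set_def using l2norm_le_sum[OF g, of N] l2norm_nonneg[OF g]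
    by (simp add: real_le_lsqrt)
  finally have "L2_set (\<lambda>n. norm (f n + g n)) {..<N} \<le> l2norm f + l2norm g" by simp
  then show "(\<Sum>n<N. (norm (f n + g n))\<^sup>2) \<le> (l2norm f + l2norm g)\<^sup>2"
  proof -
    define S where "S = (\<Sum>n<N. (norm (f n + g n))\<^sup>2)"
    assume a: "L2_set (\<lambda>n. norm (f n + g n)) {..<N} \<le> l2norm f + l2norm g"
    have S0: "S \<ge> 0" unfolding S_def by (simp add: sum_nonneg)
    have "sqrt S \<le> l2norm f + l2norm g" using a unfolding L2_set_def S_def by simp
    then have "(sqrt S)\<^sup>2 \<le> (l2norm f + l2norm g)\<^sup>2" using S0 by (intro power_mono) auto
    then show ?thesis using S0 unfolding S_def by simp
  qed
next
  show "0 \<le> l2norm f + l2norm g" using l2norm_nonneg[OF f] l2norm_nonneg[OF g] by simp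
qed

lemma l2norm_minus: "l2norm (\<lambda>n. - f n) = l2norm f"
  unfolding l2norm_def by simp

lemma l2norm_diff_commute: "l2norm (\<lambda>n. f n - g n) = l2norm (\<lambda>n. g n - f n)"
  unfolding l2norm_def by (simp add: norm_minus_commute)

lemma l2norm_triangle_diff:
  assumes "f \<in> l2" "g \<in> l2" "h \<in> l2"
  shows "l2norm (\<lambda>n. f n - h n) \<le> l2norm (\<lambda>n. f n - g n) + l2norm (\<lambda>n. g n - h n)"
  using l2norm_triangle[OF l2_diff[OF assms(1,2)] l2_diff[OF assms(2,3)]] by simp

lemma l2norm_scaleC: "f \<in> l2 \<Longrightarrow> l2norm (\<lambda>n. c *\<^sub>C (f n::'a::chilbert_space)) = cmod c * l2norm f"
  unfolding l2norm_def l2_iff by (simp add: norm_scaleC power_mult_distrib suminf_mult real_sqrt_mult)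

lemma l2norm_cong: "(\<And>n. norm (f n) = norm (g n)) \<Longrightarrow> l2norm f = l2norm g"
  unfolding l2norm_def by simp

lemma emb_l2: "emb x \<in> l2"
  by (rule l2_finite[of 0]) (simp add: emb_def)

lemma l2norm_emb: "l2norm (emb x) = norm x"
proof -
  have "(\<Sum>n. (norm (emb x n))\<^sup>2) = (norm x)\<^sup>2"
    by (subst suminf_finite[of "{0}"]) (auto simp: emb_def)
  then show ?thesis unfolding l2norm_def by simp
qed

lemma l2norm_emb_diff: "l2norm (\<lambda>n. emb x n - emb y n) = norm (x - y)"
proof -
  have "(\<lambda>n. emb x n - emb y n) = emb (x - y)" by (auto simp: emb_def)
  then show ?thesis by (simp add: l2norm_emb)
qed


lemma l2_complete:
  fixes X :: "nat \<Rightarrow> nat \<Rightarrow> 'a::chilbert_space"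
  assumes X: "\<And>k. X k \<in> l2"
    and C: "\<And>e. e > 0 \<Longrightarrow> \<exists>N. \<forall>m\<ge>N. \<forall>n\<ge>N. l2norm (\<lambda>j. X m j - X n j) < e"
  defines "f \<equiv> (\<lambda>j. lim (\<lambda>k. X k j))"
  shows "f \<in> l2" "\<And>j. (\<lambda>k. X k j) \<longlonglongrightarrow> f j"
    "(\<lambda>k. l2norm (\<lambda>j. X k j - f j)) \<longlonglongrightarrow> 0"
proof -
  have cau: "Cauchy (\<lambda>k. X k j)" for j
  proof (rule metric_CauchyI)
    fix e :: real assume "e > 0"
    then obtain N where N: "\<forall>m\<ge>N. \<forall>n\<ge>N. l2norm (\<lambda>j. X m j - X n j) < e" using C by blast
    show "\<exists>M. \<forall>m\<ge>M. \<forall>n\<ge>M. dist (X m j) (X n j) < e"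
    proof (intro exI allI impI)
      fix m n assume "N \<le> m" "N \<le> n"
      then have "l2norm (\<lambda>j. X m j - X n j) < e" using N by blast
      moreover have "norm (X m j - X n j) \<le> l2norm (\<lambda>j. X m j - X n j)"
        using l2norm_coord[OF l2_diff[OF X X]] by blast
      ultimately show "dist (X m j) (X n j) < e" by (simp add: dist_norm)
    qed
  qed
  show conv: "(\<lambda>k. X k j) \<longlonglongrightarrow> f j" for j
    unfolding f_def using cau[of j] Cauchy_convergent_iff convergent_LIMSEQ_iff by blast
  have bound: "(\<lambda>j. X m j - f j) \<in> l2 \<and> l2norm (\<lambda>j. X m j - f j) \<le> e"
    if e: "e > 0" and N: "\<forall>m\<ge>N. \<forall>n\<ge>N. l2norm (\<lambda>j. X m j - X n j) < e" and m: "m \<ge> N" for e N m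
  proof -
    have ps: "(\<Sum>j<M. (norm (X m j - f j))\<^sup>2) \<le> e\<^sup>2" for M
    proof (rule LIMSEQ_le_const2)
      show "(\<lambda>n. \<Sum>j<M. (norm (X m j - X n j))\<^sup>2) \<longlonglongrightarrow> (\<Sum>j<M. (norm (X m j - f j))\<^sup>2)"
        by (intro tendsto_intros conv)
      show "\<exists>N'. \<forall>n\<ge>N'. (\<Sum>j<M. (norm (X m j - X n j))\<^sup>2) \<le> e\<^sup>2"
      proof (intro exI allI impI)
        fix n assume n: "N \<le> n"
        have l: "l2norm (\<lambda>j. X m j - X n j) < e" using N m n by blast
        have "(\<Sum>j<M. (norm (X m j - X n j))\<^sup>2) \<le> (l2norm (\<lambda>j. X m j - X n j))\<^sup>2"
          by (rule l2norm_le_sum[OF l2_diff[OF X X]])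
        also have "\<dots> \<le> e\<^sup>2" using l l2norm_nonneg[OF l2_diff[OF X X], of m n]
          by (intro power_mono) auto
        finally show "(\<Sum>j<M. (norm (X m j - X n j))\<^sup>2) \<le> e\<^sup>2" .
      qed
    qed
    have l2: "(\<lambda>j. X m j - f j) \<in> l2" unfolding l2_iff
    proof (rule bounded_imp_summable)
      show "0 \<le> (norm (X m j - f j))\<^sup>2" for j by simp
      show "(\<Sum>j\<le>n. (norm (X m j - f j))\<^sup>2) \<le> e\<^sup>2" for n
        using ps[of "Suc n"] by (simp add: lessThan_Suc_atMost)
    qed
    show ?thesis using l2 l2norm_le_of_partial[OF l2 ps] e by simp
  qed
  obtain N1 where N1: "\<forall>m\<ge>N1. \<forall>n\<ge>N1. l2norm (\<lambda>j. X m j - X n j) < 1" using C[of 1] by auto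
  have "(\<lambda>j. X N1 j - f j) \<in> l2" using bound[OF _ N1, of N1] by simp
  from l2_diff[OF X[of N1] this] show "f \<in> l2" by simp
  show "(\<lambda>k. l2norm (\<lambda>j. X k j - f j)) \<longlonglongrightarrow> 0"
  proof (rule LIMSEQ_I)
    fix r :: real assume r: "r > 0"
    then obtain N where N: "\<forall>m\<ge>N. \<forall>n\<ge>N. l2norm (\<lambda>j. X m j - X n j) < r/2"
      using C[of "r/2"] by auto
    show "\<exists>no. \<forall>n\<ge>no. norm (l2norm (\<lambda>j. X n j - f j) - 0) < r"
    proof (intro exI allI impI)
      fix n assume n: "N \<le> n"
      have h: "(\<lambda>j. X n j - f j) \<in> l2 \<and> l2norm (\<lambda>j. X n j - f j) \<le> r/2"
        using bound[OF _ N n] r by simp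
      then have "0 \<le> l2norm (\<lambda>j. X n j - f j)" using l2norm_nonneg by blast
      then show "norm (l2norm (\<lambda>j. X n j - f j) - 0) < r"
        using h r by simp
    qed
  qed
qed

definition rs :: "(nat \<Rightarrow> 'a::zero) \<Rightarrow> nat \<Rightarrow> nat \<Rightarrow> 'a" where
  "rs f n = (\<lambda>j. if j \<le> n then f j else 0)"

lemma rs_l2: "rs (f::nat \<Rightarrow> 'a::chilbert_space) n \<in> l2"
  by (rule l2_finite[of n]) (simp add: rs_def)

lemma tail_sum_lim:
  fixes a :: "nat \<Rightarrow> real"
  assumes s: "summable a" and nn: "\<And>j. a j \<ge> 0"
  shows "(\<lambda>n. \<Sum>j. if j \<le> n then 0 else a j) \<longlonglongrightarrow> 0"
proof -
  have eq: "(\<Sum>j. if j \<le> n then 0 else a j) = suminf a - (\<Sum>i<Suc n. a i)" for n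
  proof -
    let ?g = "\<lambda>j. if j \<le> n then 0 else a j"
    have sg: "summable ?g"
      by (rule summable_comparison_test'[OF s, where N=0]) (simp add: nn)
    have "suminf ?g = (\<Sum>j. ?g (j + Suc n)) + (\<Sum>i<Suc n. ?g i)"
      by (rule suminf_split_initial_segment[OF sg])
    also have "(\<Sum>i<Suc n. ?g i) = 0" by simp
    also have "(\<Sum>j. ?g (j + Suc n)) = (\<Sum>j. a (j + Suc n))" by simp
    also have "\<dots> = suminf a - (\<Sum>i<Suc n. a i)" by (rule suminf_minus_initial_segment[OF s])
    finally show ?thesis by simp
  qed
  have "(\<lambda>n. \<Sum>i<Suc n. a i) \<longlonglongrightarrow> suminf a"
    using summable_LIMSEQ[OF s] by (rule LIMSEQ_Suc)
  then have "(\<lambda>n. suminf a - (\<Sum>i<Suc n. a i)) \<longlonglongrightarrow> suminf a - suminf a"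
    by (intro tendsto_intros)
  then show ?thesis unfolding eq by simp
qed

lemma rs_tail:
  assumes f: "(f::nat \<Rightarrow> 'a::chilbert_space) \<in> l2"
  shows "(\<lambda>n. l2norm (\<lambda>j. f j - rs f n j)) \<longlonglongrightarrow> 0"
proof -
  have eq: "l2norm (\<lambda>j. f j - rs f n j) = sqrt (\<Sum>j. if j \<le> n then 0 else (norm (f j))\<^sup>2)" for n
    unfolding l2norm_def rs_def by (intro arg_cong[where f=sqrt] arg_cong[where f=suminf]) auto
  have "(\<lambda>n. sqrt (\<Sum>j. if j \<le> n then 0 else (norm (f j))\<^sup>2)) \<longlonglongrightarrow> sqrt 0"
    using f unfolding l2_iff by (intro tendsto_real_sqrt tail_sum_lim) auto
  then show ?thesis unfolding eq by simp
qed

lemma l2_limit_unique: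
  assumes "\<And>k. X k \<in> l2" "a \<in> l2" "b \<in> l2"
    and "(\<lambda>k. l2norm (\<lambda>j. X k j - a j)) \<longlonglongrightarrow> 0"
    and "(\<lambda>k. l2norm (\<lambda>j. X k j - (b j::'a::chilbert_space))) \<longlonglongrightarrow> 0"
  shows "a = b"
proof -
  have le: "l2norm (\<lambda>j. a j - b j) \<le> l2norm (\<lambda>j. X k j - a j) + l2norm (\<lambda>j. X k j - b j)" for k
    using l2norm_triangle_diff[OF assms(2) assms(1) assms(3), of k] l2norm_diff_commute[of a "X k"]
    by simp
  have "(\<lambda>k. l2norm (\<lambda>j. X k j - a j) + l2norm (\<lambda>j. X k j - b j)) \<longlonglongrightarrow> 0 + 0"
    by (intro tendsto_add assms(4,5))
  then have "l2norm (\<lambda>j. a j - b j) \<le> 0"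
    using le by (intro LIMSEQ_le[OF tendsto_const]) auto
  then have "l2norm (\<lambda>j. a j - b j) = 0" using l2norm_nonneg[OF l2_diff[OF assms(2,3)]] by simp
  then have "(\<lambda>j. a j - b j) = (\<lambda>j. 0)" by (rule l2norm_eq0[OF l2_diff[OF assms(2,3)]])
  show ?thesis
  proof (rule ext)
    fix j
    have "a j - b j = 0" using fun_cong[OF \<open>(\<lambda>j. a j - b j) = (\<lambda>j. 0)\<close>, of j] by simp
    then show "a j = b j" by simp
  qed
qed

lemma l2_limit_coord:
  assumes "\<And>k. X k \<in> l2" "a \<in> l2"
    and "(\<lambda>k. l2norm (\<lambda>j. X k j - (a j::'a::chilbert_space))) \<longlonglongrightarrow> 0"
  shows "(\<lambda>k. X k j) \<longlonglongrightarrow> a j"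
proof -
  have le: "\<forall>k. norm (X k j - a j) \<le> l2norm (\<lambda>j. X k j - a j)"
    using l2norm_coord[OF l2_diff[OF assms(1,2)]] by blast
  have "(\<lambda>k. X k j - a j) \<longlonglongrightarrow> 0"
    by (rule Lim_null_comparison[OF always_eventually[OF le] assms(3)])
  then show ?thesis by (simp add: LIM_zero_iff)
qed


lemma scaleC_bl: "bounded_linear (\<lambda>x::'a::chilbert_space. c *\<^sub>C x)"
proof (rule bounded_linear_intro[where K="cmod c"])
  show "c *\<^sub>C (x + y) = c *\<^sub>C x + c *\<^sub>C (y::'a)" for x y by (rule scaleC_add_right)
  show "c *\<^sub>C (r *\<^sub>R x) = r *\<^sub>R (c *\<^sub>C (x::'a))" for r x
    by (simp add: scaleR_scaleC scaleC_scaleC mult.commute)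
  show "norm (c *\<^sub>C x) \<le> norm (x::'a) * cmod c" for x by (simp add: norm_scaleC mult.commute)
qed

lemma scaleC_minus1: "(-1) *\<^sub>C (x::'a::chilbert_space) = - x"
proof -
  have "(1 + -1) *\<^sub>C x = 1 *\<^sub>C x + (-1) *\<^sub>C x" by (rule scaleC_add_left)
  then have "x + (-1) *\<^sub>C x = 0" by simp
  then show ?thesis by (simp add: eq_neg_iff_add_eq_0 add.commute)
qed

lemma suminf_merge01:
  fixes a b :: "nat \<Rightarrow> real"
  assumes a: "summable a" and b0: "b 0 = a 0 + a 1" and bS: "\<And>n. b (Suc n) = a (Suc (Suc n))"
  shows "summable b" "suminf b = suminf a"
proof -
  have "summable (\<lambda>n. a (n + 2))" by (rule summable_ignore_initial_segment[OF a])
  then have h: "summable (\<lambda>n. b (n + 1))" by (simp add: bS)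
  show sb: "summable b" using h summable_iff_shift[of b 1] by blast
  have "suminf b = b 0 + (\<Sum>n. b (Suc n))" using suminf_split_head[OF sb] by simp
  also have "(\<Sum>n. b (Suc n)) = (\<Sum>n. a (Suc (Suc n)))" by (simp add: bS)
  also have "\<dots> = (\<Sum>n. a (Suc n)) - a 1"
    using suminf_split_head[of "\<lambda>n. a (Suc n)"] a summable_iff_shift[of a 1] by simp
  also have "(\<Sum>n. a (Suc n)) = suminf a - a 0" using suminf_split_head[OF a] .
  finally show "suminf b = suminf a" using b0 by simp
qed

lemma suminf_split01:
  fixes a b :: "nat \<Rightarrow> real"
  assumes a: "summable a" and b0: "b 0 + b 1 = a 0" and bS: "\<And>n. b (Suc (Suc n)) = a (Suc n)"
  shows "summable b" "suminf b = suminf a"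
proof -
  have "summable (\<lambda>n. a (n + 1))" by (rule summable_ignore_initial_segment[OF a])
  then have h: "summable (\<lambda>n. b (n + 2))" by (simp add: bS numeral_2_eq_2)
  show sb: "summable b" using h summable_iff_shift[of b 2] by blast
  have sb1: "summable (\<lambda>n. b (Suc n))" using sb summable_iff_shift[of b 1] by simp
  have "suminf b = b 0 + (\<Sum>n. b (Suc n))" using suminf_split_head[OF sb] by simp
  also have "(\<Sum>n. b (Suc n)) = b 1 + (\<Sum>n. b (Suc (Suc n)))"
    using suminf_split_head[OF sb1] by simp
  also have "(\<Sum>n. b (Suc (Suc n))) = (\<Sum>n. a (Suc n))" by (simp add: bS)
  also have "\<dots> = suminf a - a 0" using suminf_split_head[OF a] .
  finally show "suminf b = suminf a" using b0 by simp
qed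

lemma l2norm_mono:
  assumes g: "g \<in> l2" and le: "\<And>j. norm (f j) \<le> norm (g j)"
  shows "l2norm (f::nat \<Rightarrow> 'a::chilbert_space) \<le> l2norm (g::nat \<Rightarrow> 'a)"
proof -
  have f: "f \<in> l2" by (rule l2_mono[where C=1, OF g]) (simp add: le)
  have "(\<Sum>j. (norm (f j))\<^sup>2) \<le> (\<Sum>j. (norm (g j))\<^sup>2)"
    using f g unfolding l2_iff by (intro suminf_le) (auto intro: power_mono le)
  then show ?thesis unfolding l2norm_def by simp
qed

lemma l2norm_tendsto:
  assumes X: "\<And>n. X n \<in> l2" and L: "L \<in> l2"
    and lim: "(\<lambda>n. l2norm (\<lambda>j. X n j - (L j::'a::chilbert_space))) \<longlonglongrightarrow> 0"
  shows "(\<lambda>n. l2norm (X n)) \<longlonglongrightarrow> l2norm L"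
proof -
  have le: "\<forall>n. norm (l2norm (X n) - l2norm L) \<le> l2norm (\<lambda>j. X n j - L j)"
  proof
    fix n
    have "l2norm (X n) \<le> l2norm (\<lambda>j. X n j - L j) + l2norm L"
      using l2norm_triangle[OF l2_diff[OF X[of n] L] L] by simp
    moreover have "l2norm L \<le> l2norm (\<lambda>j. L j - X n j) + l2norm (X n)"
      using l2norm_triangle[OF l2_diff[OF L X[of n]] X[of n]] by simp
    moreover have "l2norm (\<lambda>j. L j - X n j) = l2norm (\<lambda>j. X n j - L j)"
      by (rule l2norm_diff_commute)
    ultimately show "norm (l2norm (X n) - l2norm L) \<le> l2norm (\<lambda>j. X n j - L j)" by simp
  qed
  have "(\<lambda>n. l2norm (X n) - l2norm L) \<longlonglongrightarrow> 0"
    by (rule Lim_null_comparison[OF always_eventually[OF le] lim])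
  then show ?thesis by (simp add: LIM_zero_iff)
qed


locale dil =
  fixes V1 V2 Q :: "'h::chilbert_space \<Rightarrow> 'h" and q :: complex
  assumes V1: "isometry_op V1" and V2: "isometry_op V2" and Qu: "unitary_op Q"
    and rel: "\<And>x. V2 (V1 x) = Q (V1 (V2 x))" and q: "norm q = 1"
begin

definition W where "W = (\<lambda>x. V1 (V2 x))"
definition K where "K = {f \<in> l2. \<forall>n. n \<noteq> 0 \<longrightarrow> perp W (f n)}"
definition Z where "Z f = (\<lambda>n. if n = 0 then W (f 0) + f 1 else f (Suc n))"
definition Zi where "Zi f = (\<lambda>n. if n = 0 then Ws W (f 0) else if n = 1 then f 0 - W (Ws W (f 0)) else f (n - 1))"
definition Qb where "Qb f = (\<lambda>n. if n = 0 then Q (f 0) else q *\<^sub>C f n)"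
definition T where "T f = Qb (Z f)"

lemma Wiso: "isometry_op W"
  unfolding W_def by (rule iso_comp[OF V1 V2])
lemmas pz = perp_zero[OF Wiso]
lemmas padd = perp_add[OF Wiso]
lemmas pdiff = perp_diff[OF Wiso]

lemma Q: "isometry_op Q" using Qu unfolding unitary_op_def by simp
lemma Qsurj: "surj Q" using Qu unfolding unitary_op_def by simp
lemma q0: "q \<noteq> 0" using q by auto

lemma V1QW: "V1 (Q (W x)) = W (V1 x)"
  unfolding W_def using rel[of x] by simp

lemma K_l2: "f \<in> K \<Longrightarrow> f \<in> l2" unfolding K_def by simp
lemma K_perp: "f \<in> K \<Longrightarrow> n \<noteq> 0 \<Longrightarrow> perp W (f n)" unfolding K_def by simp
lemma K_I: "f \<in> l2 \<Longrightarrow> (\<And>n. n \<noteq> 0 \<Longrightarrow> perp W (f n)) \<Longrightarrow> f \<in> K" unfolding K_def by simp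

lemma emb_K: "emb x \<in> K"
  by (rule K_I[OF emb_l2]) (simp add: emb_def pz)

lemma K_zero: "(\<lambda>n. 0) \<in> K"
  by (rule K_I[OF l2_zero]) (simp add: pz)

lemma K_add: "f \<in> K \<Longrightarrow> g \<in> K \<Longrightarrow> (\<lambda>n. f n + g n) \<in> K"
  by (rule K_I[OF l2_add[OF K_l2 K_l2]]) (auto intro: padd K_perp)

lemma K_scaleC: "f \<in> K \<Longrightarrow> (\<lambda>n. c *\<^sub>C f n) \<in> K"
  by (rule K_I[OF l2_scaleC[OF K_l2]]) (auto intro: perp_scaleC[OF Wiso] K_perp)

lemma K_diff: "f \<in> K \<Longrightarrow> g \<in> K \<Longrightarrow> (\<lambda>n. f n - g n) \<in> K"
  by (rule K_I[OF l2_diff[OF K_l2 K_l2]]) (auto intro: pdiff K_perp)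

lemma K_closed:
  assumes x: "\<And>k. x k \<in> K" and f: "f \<in> l2" and lim: "(\<lambda>k. l2norm (\<lambda>n. x k n - f n)) \<longlonglongrightarrow> 0"
  shows "f \<in> K"
proof (rule K_I[OF f])
  fix n :: nat assume n: "n \<noteq> 0"
  have "(\<lambda>k. x k n) \<longlonglongrightarrow> f n" by (rule l2_limit_coord[OF K_l2[OF x] f lim])
  then show "perp W (f n)" by (rule perp_closed[OF Wiso]) (rule K_perp[OF x n])
qed

lemma closed_K: "closed_subspace_l2 K"
  unfolding closed_subspace_l2_def
  using K_l2 K_zero K_add K_scaleC K_closed by blast

lemma rs_K: "f \<in> K \<Longrightarrow> rs f n \<in> K"
  by (rule K_I[OF rs_l2]) (auto simp: rs_def pz K_perp)

lemma Z_l2: "f \<in> l2 \<Longrightarrow> Z f \<in> l2"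
proof -
  assume f: "f \<in> l2"
  have "summable (\<lambda>n. (norm (f (n + 2)))\<^sup>2)" using f unfolding l2_iff
    by (rule summable_ignore_initial_segment)
  then have "summable (\<lambda>n. (norm (Z f (n + 1)))\<^sup>2)" by (simp add: Z_def numeral_2_eq_2)
  then show ?thesis unfolding l2_iff using summable_iff_shift[of "\<lambda>n. (norm (Z f n))\<^sup>2" 1] by blast
qed

lemma Z_K: "f \<in> K \<Longrightarrow> Z f \<in> K"
  by (rule K_I[OF Z_l2[OF K_l2]]) (auto simp: Z_def K_perp)

lemma Z_norm: "f \<in> K \<Longrightarrow> l2norm (Z f) = l2norm f"
proof -
  assume f: "f \<in> K"
  let ?a = "\<lambda>n. (norm (f n))\<^sup>2" and ?b = "\<lambda>n. (norm (Z f n))\<^sup>2"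
  have "ri (W (f 0)) (f 1) = 0" using K_perp[OF f, of 1] unfolding perp_def by simp
  then have "?b 0 = ?a 0 + ?a 1" unfolding Z_def using pythag[of "W (f 0)" "f 1"] iso_norm[OF Wiso] by simp
  moreover have "?b (Suc n) = ?a (Suc (Suc n))" for n by (simp add: Z_def)
  ultimately have "suminf ?b = suminf ?a"
    using suminf_merge01[of ?a ?b] K_l2[OF f] unfolding l2_iff by blast
  then show ?thesis unfolding l2norm_def by simp
qed

lemma Zi_K: "f \<in> K \<Longrightarrow> Zi f \<in> K"
proof -
  assume f: "f \<in> K"
  let ?a = "\<lambda>n. (norm (f n))\<^sup>2" and ?b = "\<lambda>n. (norm (Zi f n))\<^sup>2"
  have "?b 0 + ?b 1 = ?a 0" unfolding Zi_def using Ws_pyth[OF Wiso] by simp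
  moreover have "?b (Suc (Suc n)) = ?a (Suc n)" for n by (simp add: Zi_def)
  ultimately have "summable ?b"
    using suminf_split01[of ?a ?b] K_l2[OF f] unfolding l2_iff by blast
  then show ?thesis
    by (intro K_I) (auto simp: l2_iff Zi_def K_perp[OF f] Ws_perp[OF Wiso])
qed

lemma Zi_norm: "f \<in> K \<Longrightarrow> l2norm (Zi f) = l2norm f"
proof -
  assume f: "f \<in> K"
  let ?a = "\<lambda>n. (norm (f n))\<^sup>2" and ?b = "\<lambda>n. (norm (Zi f n))\<^sup>2"
  have "?b 0 + ?b 1 = ?a 0" unfolding Zi_def using Ws_pyth[OF Wiso] by simp
  moreover have "?b (Suc (Suc n)) = ?a (Suc n)" for n by (simp add: Zi_def)
  ultimately have "suminf ?b = suminf ?a"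
    using suminf_split01[of ?a ?b] K_l2[OF f] unfolding l2_iff by blast
  then show ?thesis unfolding l2norm_def by simp
qed

lemma Z_Zi: "Z (Zi f) = f"
  unfolding Z_def Zi_def by (rule ext) simp

lemma Zi_Z: "f \<in> K \<Longrightarrow> Zi (Z f) = f"
proof (rule ext)
  fix n assume f: "f \<in> K"
  have p: "perp W (f 1)" using K_perp[OF f] by simp
  have ws: "Ws W (W (f 0) + f 1) = f 0" by (rule Ws_Wplus[OF Wiso p])
  show "Zi (Z f) n = f n"
    unfolding Zi_def Z_def using ws by (cases n) (auto simp: nat.case_eq_if)
qed

lemma Z_add: "Z (\<lambda>n. f n + g n) = (\<lambda>n. Z f n + Z g n)"
  unfolding Z_def using iso_add[OF Wiso] by (auto simp: algebra_simps)

lemma Z_scaleC: "Z (\<lambda>n. c *\<^sub>C f n) = (\<lambda>n. c *\<^sub>C Z f n)"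
  unfolding Z_def using iso_scaleC[OF Wiso] by (auto simp: scaleC_add_right)

lemma Zi_add: "Zi (\<lambda>n. f n + g n) = (\<lambda>n. Zi f n + Zi g n)"
  unfolding Zi_def using iso_add[OF Wiso] Ws_add[OF Wiso] by (auto simp: algebra_simps)

lemma Zi_scaleC: "Zi (\<lambda>n. c *\<^sub>C f n) = (\<lambda>n. c *\<^sub>C Zi f n)"
  unfolding Zi_def using iso_scaleC[OF Wiso] Ws_scaleC[OF Wiso] by (auto simp: scaleC_diff_right)

lemma Zi_emb_W: "Zi (emb (W y)) = emb y"
  unfolding Zi_def emb_def by (rule ext) (simp add: Ws_W[OF Wiso])

lemma Zi_zero: "Zi (\<lambda>n. 0) = (\<lambda>n. 0)"
  unfolding Zi_def by (rule ext) (simp add: Ws_zero[OF Wiso] iso_zero[OF Wiso])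

lemma Z_emb: "Z (emb x) = emb (W x)"
  unfolding Z_def emb_def by (rule ext) simp

lemma Qb_K: "f \<in> K \<Longrightarrow> Qb f \<in> K"
proof -
  assume f: "f \<in> K"
  have "Qb f \<in> l2"
    by (rule l2_mono[where C=1, OF K_l2[OF f]]) (simp add: Qb_def iso_norm[OF Q] norm_scaleC q)
  then show ?thesis
    by (rule K_I) (simp add: Qb_def perp_scaleC[OF Wiso] K_perp[OF f])
qed

lemma Qb_norm: "l2norm (Qb f) = l2norm f"
  by (rule l2norm_cong) (simp add: Qb_def iso_norm[OF Q] norm_scaleC q)

lemma Qb_add: "Qb (\<lambda>n. f n + g n) = (\<lambda>n. Qb f n + Qb g n)"
  unfolding Qb_def using iso_add[OF Q] by (auto simp: scaleC_add_right)

lemma Qb_scaleC: "Qb (\<lambda>n. c *\<^sub>C f n) = (\<lambda>n. c *\<^sub>C Qb f n)"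
  unfolding Qb_def using iso_scaleC[OF Q] by (auto simp: scaleC_scaleC mult.commute)

lemma Qb_onto: "g \<in> K \<Longrightarrow> \<exists>r\<in>K. Qb r = g"
proof -
  assume g: "g \<in> K"
  define r where "r = (\<lambda>n. if n = 0 then inv Q (g 0) else inverse q *\<^sub>C g n)"
  have Qinv: "Q (inv Q y) = y" for y using Qsurj by (simp add: surj_f_inv_f)
  have ninv: "norm (inv Q y) = norm y" for y using iso_norm[OF Q, of "inv Q y"] Qinv by simp
  have "r \<in> l2"
    by (rule l2_mono[where C=1, OF K_l2[OF g]]) (simp add: r_def ninv norm_scaleC q norm_inverse)
  then have "r \<in> K"
    by (rule K_I) (simp add: r_def perp_scaleC[OF Wiso] K_perp[OF g])
  moreover have "Qb r = g"
    unfolding Qb_def r_def by (rule ext) (simp add: Qinv scaleC_scaleC q0)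
  ultimately show ?thesis by blast
qed

lemma Qb_emb: "Qb (emb h) = emb (Q h)"
  unfolding Qb_def emb_def by (rule ext) simp

lemma T_K: "f \<in> K \<Longrightarrow> T f \<in> K"
  unfolding T_def by (intro Qb_K Z_K)

lemma T_norm: "f \<in> K \<Longrightarrow> l2norm (T f) = l2norm f"
  unfolding T_def by (simp add: Qb_norm Z_norm)

lemma T_add: "T (\<lambda>n. f n + g n) = (\<lambda>n. T f n + T g n)"
  unfolding T_def by (simp add: Z_add Qb_add)

lemma T_scaleC: "T (\<lambda>n. c *\<^sub>C f n) = (\<lambda>n. c *\<^sub>C T f n)"
  unfolding T_def by (simp add: Z_scaleC Qb_scaleC)

end


context dil
begin

definition hd where "hd f n = ((T ^^ n) f) 0"
definition A where "A f n = (Zi ^^ n) (emb (V1 (hd f n)))"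
definition B where "B f n = (Zi ^^ Suc n) (emb (V1 (Q (f (Suc n)))))"
definition U1 where "U1 f = (\<lambda>j. lim (\<lambda>n. A f n j))"

lemma Tpow_Suc: "((T ^^ n) f) (Suc j) = q ^ n *\<^sub>C f (Suc j + n)"
proof (induction n arbitrary: j)
  case 0 then show ?case by simp
next
  case (Suc n)
  have "((T ^^ Suc n) f) (Suc j) = q *\<^sub>C ((T ^^ n) f) (Suc (Suc j))"
    by (simp add: T_def Qb_def Z_def)
  also have "\<dots> = q ^ Suc n *\<^sub>C f (Suc j + Suc n)" using Suc by (simp add: scaleC_scaleC)
  finally show ?case .
qed

lemma hd_0: "hd f 0 = f 0" by (simp add: hd_def)

lemma hd_Suc: "hd f (Suc n) = Q (W (hd f n)) + q ^ n *\<^sub>C Q (f (Suc n))"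
proof -
  have "hd f (Suc n) = Q (W (hd f n) + ((T ^^ n) f) (Suc 0))"
    by (simp add: hd_def T_def Qb_def Z_def)
  also have "((T ^^ n) f) (Suc 0) = q ^ n *\<^sub>C f (Suc n)" by (simp add: Tpow_Suc)
  finally show ?thesis using iso_add[OF Q] iso_scaleC[OF Q] by simp
qed

lemma ZiP_add: "(Zi ^^ k) (\<lambda>n. f n + g n) = (\<lambda>n. (Zi ^^ k) f n + (Zi ^^ k) g n)"
  by (induction k) (simp_all add: Zi_add)

lemma ZiP_scaleC: "(Zi ^^ k) (\<lambda>n. c *\<^sub>C f n) = (\<lambda>n. c *\<^sub>C (Zi ^^ k) f n)"
  by (induction k) (simp_all add: Zi_scaleC)

lemma ZiP_zero: "(Zi ^^ k) (\<lambda>n. 0) = (\<lambda>n. 0)"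
  by (induction k) (simp_all add: Zi_zero)

lemma ZiP_K: "f \<in> K \<Longrightarrow> (Zi ^^ k) f \<in> K"
  by (induction k) (simp_all add: Zi_K)

lemma ZiP_norm: "f \<in> K \<Longrightarrow> l2norm ((Zi ^^ k) f) = l2norm f"
  by (induction k) (simp_all add: Zi_norm ZiP_K)

lemma TP_add: "(T ^^ k) (\<lambda>n. f n + g n) = (\<lambda>n. (T ^^ k) f n + (T ^^ k) g n)"
  by (induction k) (simp_all add: T_add)

lemma TP_scaleC: "(T ^^ k) (\<lambda>n. c *\<^sub>C f n) = (\<lambda>n. c *\<^sub>C (T ^^ k) f n)"
  by (induction k) (simp_all add: T_scaleC)

lemma TP_K: "f \<in> K \<Longrightarrow> (T ^^ k) f \<in> K"
  by (induction k) (simp_all add: T_K)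

lemma TP_norm: "f \<in> K \<Longrightarrow> l2norm ((T ^^ k) f) = l2norm f"
  by (induction k) (simp_all add: T_norm TP_K)

lemma emb_add_scale: "emb (a + c *\<^sub>C b) = (\<lambda>j. emb a j + c *\<^sub>C emb b j)"
  unfolding emb_def by (rule ext) simp

lemma emb_add: "emb (a + b) = (\<lambda>j. emb a j + emb b j)"
  unfolding emb_def by (rule ext) simp

lemma emb_scaleC: "emb (c *\<^sub>C b) = (\<lambda>j. c *\<^sub>C emb b j)"
  unfolding emb_def by (rule ext) simp

lemma emb_zero: "emb 0 = (\<lambda>j. 0)"
  unfolding emb_def by (rule ext) simp

lemma A_0: "A f 0 = emb (V1 (f 0))" by (simp add: A_def hd_0)

lemma A_Suc: "A f (Suc n) = (\<lambda>j. A f n j + q ^ n *\<^sub>C B f n j)"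
proof -
  have "V1 (hd f (Suc n)) = W (V1 (hd f n)) + q ^ n *\<^sub>C V1 (Q (f (Suc n)))"
    unfolding hd_Suc using iso_add[OF V1] iso_scaleC[OF V1] V1QW by simp
  then have "A f (Suc n) = (Zi ^^ Suc n) (\<lambda>j. emb (W (V1 (hd f n))) j + q ^ n *\<^sub>C emb (V1 (Q (f (Suc n)))) j)"
    unfolding A_def by (simp add: emb_add_scale)
  also have "\<dots> = (\<lambda>j. (Zi ^^ Suc n) (emb (W (V1 (hd f n)))) j + q ^ n *\<^sub>C B f n j)"
    unfolding ZiP_add ZiP_scaleC B_def ..
  also have "(Zi ^^ Suc n) (emb (W (V1 (hd f n)))) = A f n"
    unfolding A_def funpow_Suc_right o_apply Zi_emb_W ..
  finally show ?thesis .
qed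

lemma B_zero: "f (Suc n) = 0 \<Longrightarrow> B f n = (\<lambda>j. 0)"
  unfolding B_def by (simp add: iso_zero[OF Q] iso_zero[OF V1] emb_zero ZiP_zero Zi_zero del: funpow.simps)

lemma B_dep: "f (Suc n) = g (Suc n) \<Longrightarrow> B f n = B g n"
  unfolding B_def by simp

lemma A_dep: "(\<And>j. j \<le> n \<Longrightarrow> f j = g j) \<Longrightarrow> A f n = A g n"
proof (induction n)
  case 0 then show ?case by (simp add: A_0)
next
  case (Suc n)
  have "A f n = A g n" using Suc by simp
  moreover have "B f n = B g n" using Suc.prems by (intro B_dep) simp
  ultimately show ?case by (simp add: A_Suc)
qed

lemma A_stable: "(\<And>j. j > m \<Longrightarrow> f j = 0) \<Longrightarrow> A f (m + k) = A f m"
proof (induction k)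
  case 0 then show ?case by simp
next
  case (Suc k)
  have "B f (m + k) = (\<lambda>j. 0)" using Suc.prems by (intro B_zero) simp
  then show ?case using Suc by (simp add: A_Suc)
qed

lemma A_stable': "(\<And>j. j > m \<Longrightarrow> f j = 0) \<Longrightarrow> m \<le> n \<Longrightarrow> A f n = A f m"
  using A_stable[of m f "n - m"] by simp

lemma hd_add: "hd (\<lambda>n. f n + g n) k = hd f k + hd g k"
  unfolding hd_def TP_add by simp

lemma hd_scaleC: "hd (\<lambda>n. c *\<^sub>C f n) k = c *\<^sub>C hd f k"
  unfolding hd_def TP_scaleC by simp

lemma A_add: "A (\<lambda>j. f j + g j) n = (\<lambda>j. A f n j + A g n j)"
  unfolding A_def hd_add iso_add[OF V1] emb_add ZiP_add ..

lemma A_scaleC: "A (\<lambda>j. c *\<^sub>C f j) n = (\<lambda>j. c *\<^sub>C A f n j)"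
  unfolding A_def hd_scaleC iso_scaleC[OF V1] emb_scaleC ZiP_scaleC ..

lemma A_K: "A f n \<in> K"
  unfolding A_def by (intro ZiP_K emb_K)

lemma TP_emb: "(\<And>j. j > n \<Longrightarrow> g j = 0) \<Longrightarrow> (T ^^ n) g = emb (hd g n)"
proof (rule ext)
  fix j assume z: "\<And>j. j > n \<Longrightarrow> g j = 0"
  show "(T ^^ n) g j = emb (hd g n) j"
  proof (cases j)
    case 0 then show ?thesis by (simp add: emb_def hd_def)
  next
    case (Suc i) then show ?thesis by (simp add: Tpow_Suc z emb_def)
  qed
qed

lemma A_iso: "g \<in> K \<Longrightarrow> (\<And>j. j > n \<Longrightarrow> g j = 0) \<Longrightarrow> l2norm (A g n) = l2norm g"
proof -
  assume g: "g \<in> K" and z: "\<And>j. j > n \<Longrightarrow> g j = 0"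
  have "l2norm g = l2norm ((T ^^ n) g)" by (simp add: TP_norm g)
  also have "\<dots> = norm (hd g n)" by (simp add: TP_emb[OF z] l2norm_emb)
  finally have "l2norm g = norm (hd g n)" .
  moreover have "l2norm (A g n) = norm (V1 (hd g n))"
    unfolding A_def by (simp add: ZiP_norm emb_K l2norm_emb)
  ultimately show ?thesis by (simp add: iso_norm[OF V1])
qed

lemma A_cauchy_bound:
  assumes f: "f \<in> K" and mn: "m \<le> n"
  shows "l2norm (\<lambda>j. A f n j - A f m j) \<le> l2norm (\<lambda>j. f j - rs f m j)"
proof -
  define g where "g = (\<lambda>j. if m < j \<and> j \<le> n then f j else 0)"
  have g: "g \<in> K"
    by (rule K_I[OF l2_finite[of n]]) (auto simp: g_def pz K_perp[OF f])
  have "A f m = A (rs f m) m" by (rule A_dep) (simp add: rs_def)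
  also have "\<dots> = A (rs f m) n" by (rule A_stable'[symmetric]) (auto simp: rs_def mn)
  finally have e1: "A f m = A (rs f m) n" .
  have "A f n = A (\<lambda>j. rs f m j + g j) n" by (rule A_dep) (auto simp: rs_def g_def)
  also have "\<dots> = (\<lambda>j. A (rs f m) n j + A g n j)" by (rule A_add)
  finally have "(\<lambda>j. A f n j - A f m j) = A g n" using e1 by simp
  then have "l2norm (\<lambda>j. A f n j - A f m j) = l2norm g"
    using A_iso[OF g] by (simp add: g_def)
  also have "\<dots> \<le> l2norm (\<lambda>j. f j - rs f m j)"
    by (rule l2norm_mono[OF l2_diff[OF K_l2[OF f] rs_l2]]) (simp add: g_def rs_def)
  finally show ?thesis .
qed

lemma A_cauchy:
  assumes f: "f \<in> K" and e: "e > 0"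
  shows "\<exists>N. \<forall>m\<ge>N. \<forall>n\<ge>N. l2norm (\<lambda>j. A f m j - A f n j) < e"
proof -
  obtain N where N: "\<forall>n\<ge>N. norm (l2norm (\<lambda>j. f j - rs f n j) - 0) < e"
    using LIMSEQ_D[OF rs_tail[OF K_l2[OF f]] e] by blast
  have N': "l2norm (\<lambda>j. f j - rs f n j) < e" if "n \<ge> N" for n
    using N that l2norm_nonneg[OF l2_diff[OF K_l2[OF f] rs_l2]] by fastforce
  show ?thesis
  proof (intro exI allI impI)
    fix m n assume m: "N \<le> m" and n: "N \<le> n"
    show "l2norm (\<lambda>j. A f m j - A f n j) < e"
    proof (cases "m \<le> n")
      case True
      then show ?thesis using A_cauchy_bound[OF f True] N'[OF m] l2norm_diff_commute[of "A f m" "A f n"]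
        by simp
    next
      case False
      then show ?thesis using A_cauchy_bound[OF f, of n m] N'[OF n] by simp
    qed
  qed
qed

lemma U1_facts:
  assumes f: "f \<in> K"
  shows "U1 f \<in> l2" "\<And>j. (\<lambda>n. A f n j) \<longlonglongrightarrow> U1 f j"
    "(\<lambda>n. l2norm (\<lambda>j. A f n j - U1 f j)) \<longlonglongrightarrow> 0"
  using l2_complete[of "A f", OF K_l2[OF A_K] A_cauchy[OF f]] unfolding U1_def by auto

lemma U1_K: "f \<in> K \<Longrightarrow> U1 f \<in> K"
  by (rule K_closed[OF A_K U1_facts(1) U1_facts(3)])

lemma U1_norm: "f \<in> K \<Longrightarrow> l2norm (U1 f) = l2norm f"
proof -
  assume f: "f \<in> K"
  have eq: "l2norm (A f n) = l2norm (rs f n)" for n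
  proof -
    have "A f n = A (rs f n) n" by (rule A_dep) (simp add: rs_def)
    then show ?thesis using A_iso[OF rs_K[OF f]] by (simp add: rs_def)
  qed
  have "(\<lambda>n. l2norm (A f n)) \<longlonglongrightarrow> l2norm (U1 f)"
    by (rule l2norm_tendsto[OF K_l2[OF A_K] U1_facts(1)[OF f] U1_facts(3)[OF f]])
  moreover have "(\<lambda>n. l2norm (rs f n)) \<longlonglongrightarrow> l2norm f"
    using rs_tail[OF K_l2[OF f]]
    by (intro l2norm_tendsto[OF rs_l2 K_l2[OF f]]) (simp add: l2norm_diff_commute[of f])
  ultimately show ?thesis unfolding eq by (rule LIMSEQ_unique)
qed

lemma U1_add: "f \<in> K \<Longrightarrow> g \<in> K \<Longrightarrow> U1 (\<lambda>j. f j + g j) = (\<lambda>j. U1 f j + U1 g j)"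
proof (rule ext)
  fix j assume f: "f \<in> K" and g: "g \<in> K"
  have "(\<lambda>n. A (\<lambda>j. f j + g j) n j) \<longlonglongrightarrow> U1 f j + U1 g j"
    unfolding A_add by (intro tendsto_add U1_facts(2) f g)
  then show "U1 (\<lambda>j. f j + g j) j = U1 f j + U1 g j" unfolding U1_def by (rule limI)
qed

lemma U1_scaleC: "f \<in> K \<Longrightarrow> U1 (\<lambda>j. c *\<^sub>C f j) = (\<lambda>j. c *\<^sub>C U1 f j)"
proof (rule ext)
  fix j assume f: "f \<in> K"
  have "(\<lambda>n. A (\<lambda>j. c *\<^sub>C f j) n j) \<longlonglongrightarrow> c *\<^sub>C U1 f j"
    unfolding A_scaleC by (intro bounded_linear.tendsto[OF scaleC_bl] U1_facts(2) f)
  then show "U1 (\<lambda>j. c *\<^sub>C f j) j = c *\<^sub>C U1 f j" unfolding U1_def by (rule limI)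
qed

lemma U1_diff: "f \<in> K \<Longrightarrow> g \<in> K \<Longrightarrow> U1 (\<lambda>j. f j - g j) = (\<lambda>j. U1 f j - U1 g j)"
proof -
  assume f: "f \<in> K" and g: "g \<in> K"
  have e: "(\<lambda>j. f j - g j) = (\<lambda>j. f j + (-1) *\<^sub>C g j)" by (simp add: scaleC_minus1)
  have "U1 (\<lambda>j. f j - g j) = (\<lambda>j. U1 f j + U1 (\<lambda>j. (-1) *\<^sub>C g j) j)"
    unfolding e by (rule U1_add[OF f K_scaleC[OF g]])
  also have "\<dots> = (\<lambda>j. U1 f j + (-1) *\<^sub>C U1 g j)" unfolding U1_scaleC[OF g] ..
  finally show ?thesis by (simp add: scaleC_minus1)
qed

lemma U1_emb: "U1 (emb h) = emb (V1 h)"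
proof (rule ext)
  fix j
  have "A (emb h) n = emb (V1 h)" for n
    using A_stable'[of 0 "emb h" n] by (simp add: emb_def A_0)
  then show "U1 (emb h) j = emb (V1 h) j" unfolding U1_def by simp
qed

end


context dil
begin

lemma A_T: "A (T f) n = Z (A f (Suc n))"
proof -
  have "hd (T f) n = hd f (Suc n)" unfolding hd_def funpow_Suc_right o_apply ..
  then show ?thesis unfolding A_def funpow.simps(2) o_apply Z_Zi by simp
qed

lemma Z_U1: "f \<in> K \<Longrightarrow> Z (U1 f) = U1 (T f)"
proof (rule ext)
  fix j assume f: "f \<in> K"
  have c: "(\<lambda>n. A f (Suc n) i) \<longlonglongrightarrow> U1 f i" for i
    using U1_facts(2)[OF f, of i] by (rule LIMSEQ_Suc)
  have "(\<lambda>n. Z (A f (Suc n)) j) \<longlonglongrightarrow> Z (U1 f) j"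
  proof (cases "j = 0")
    case True
    have "(\<lambda>n. W (A f (Suc n) 0) + A f (Suc n) 1) \<longlonglongrightarrow> W (U1 f 0) + U1 f 1"
      by (intro tendsto_add bounded_linear.tendsto[OF iso_bl[OF Wiso]] c)
    then show ?thesis using True by (simp add: Z_def)
  next
    case False
    then show ?thesis using c[of "Suc j"] by (simp add: Z_def)
  qed
  then have "(\<lambda>n. A (T f) n j) \<longlonglongrightarrow> Z (U1 f) j" unfolding A_T .
  then show "Z (U1 f) j = U1 (T f) j" unfolding U1_def by (rule limI[symmetric])
qed

lemma U1_inj: "f \<in> K \<Longrightarrow> g \<in> K \<Longrightarrow> U1 f = U1 g \<Longrightarrow> f = g"
proof -
  assume f: "f \<in> K" and g: "g \<in> K" and e: "U1 f = U1 g"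
  have "l2norm (\<lambda>j. f j - g j) = l2norm (U1 (\<lambda>j. f j - g j))" using U1_norm[OF K_diff[OF f g]] by simp
  also have "\<dots> = 0" unfolding U1_diff[OF f g] e by (simp add: l2norm_def)
  finally have "(\<lambda>j. f j - g j) = (\<lambda>j. 0)" by (rule l2norm_eq0[OF l2_diff[OF K_l2[OF f] K_l2[OF g]]])
  then show "f = g" by (metis (no_types, lifting) eq_iff_diff_eq_0 ext)
qed

lemma der: "g \<in> K \<Longrightarrow> p' \<in> K \<Longrightarrow> U1 p' = Z g \<Longrightarrow> \<exists>p\<in>K. U1 p = g"
proof -
  assume g: "g \<in> K" and p': "p' \<in> K" and e: "U1 p' = Z g"
  obtain r where r: "r \<in> K" "Qb r = p'" using Qb_onto[OF p'] by blast
  define p where "p = Zi r"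
  have pK: "p \<in> K" unfolding p_def by (rule Zi_K[OF r(1)])
  have "T p = p'" unfolding T_def p_def Z_Zi r(2) ..
  then have "Z (U1 p) = Z g" using Z_U1[OF pK] e by simp
  then have "Zi (Z (U1 p)) = Zi (Z g)" by simp
  then have "U1 p = g" using Zi_Z[OF U1_K[OF pK]] Zi_Z[OF g] by simp
  then show ?thesis using pK by blast
qed

lemma claim: "g \<in> K \<Longrightarrow> (\<And>j. j > n \<Longrightarrow> g j = 0) \<Longrightarrow> \<exists>p'\<in>K. U1 p' = Z g"
proof (induction n arbitrary: g)
  case 0
  have "g = emb (g 0)" unfolding emb_def using 0 by (intro ext) simp
  then have "Z g = emb (W (g 0))" using Z_emb by metis
  moreover have "U1 (emb (V2 (g 0))) = emb (W (g 0))" by (simp add: U1_emb W_def)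
  ultimately show ?case using emb_K by metis
next
  case (Suc n)
  have zg: "Z g \<in> K" by (rule Z_K[OF Suc.prems(1)])
  have "Z g j = 0" if "j > n" for j using that Suc.prems(2) by (simp add: Z_def)
  then obtain p'' where "p'' \<in> K" "U1 p'' = Z (Z g)" using Suc.IH[OF zg] by blast
  then obtain p' where "p' \<in> K" "U1 p' = Z g" using der[OF zg] by blast
  then show ?case by blast
qed

lemma fin_onto: "g \<in> K \<Longrightarrow> (\<And>j. j > n \<Longrightarrow> g j = 0) \<Longrightarrow> \<exists>p\<in>K. U1 p = g"
  using claim der by blast

lemma U1_onto: "g \<in> K \<Longrightarrow> \<exists>p\<in>K. U1 p = g"
proof -
  assume g: "g \<in> K"
  have "\<exists>p\<in>K. U1 p = rs g n" for n by (rule fin_onto[OF rs_K[OF g], of n]) (simp add: rs_def)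
  then obtain P where P: "\<And>n. P n \<in> K" "\<And>n. U1 (P n) = rs g n" by metis
  have dist: "l2norm (\<lambda>j. P m j - P n j) = l2norm (\<lambda>j. rs g m j - rs g n j)" for m n
    using U1_norm[OF K_diff[OF P(1) P(1)], of m n] unfolding U1_diff[OF P(1) P(1)] P(2) by simp
  have tl: "(\<lambda>n. l2norm (\<lambda>j. rs g n j - g j)) \<longlonglongrightarrow> 0"
    using rs_tail[OF K_l2[OF g]] by (simp add: l2norm_diff_commute[of g])
  have cau: "\<exists>N. \<forall>m\<ge>N. \<forall>n\<ge>N. l2norm (\<lambda>j. P m j - P n j) < e" if e: "e > 0" for e
  proof -
    obtain N where N: "\<forall>n\<ge>N. norm (l2norm (\<lambda>j. rs g n j - g j) - 0) < e/2"
      using LIMSEQ_D[OF tl, of "e/2"] e by auto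
    show ?thesis
    proof (intro exI allI impI)
      fix m n assume m: "N \<le> m" and n: "N \<le> n"
      have "l2norm (\<lambda>j. rs g m j - rs g n j) \<le> l2norm (\<lambda>j. rs g m j - g j) + l2norm (\<lambda>j. g j - rs g n j)"
        by (rule l2norm_triangle_diff[OF rs_l2 K_l2[OF g] rs_l2])
      also have "l2norm (\<lambda>j. g j - rs g n j) = l2norm (\<lambda>j. rs g n j - g j)"
        by (rule l2norm_diff_commute)
      finally have le: "l2norm (\<lambda>j. rs g m j - rs g n j) \<le> l2norm (\<lambda>j. rs g m j - g j) + l2norm (\<lambda>j. rs g n j - g j)" .
      have a: "l2norm (\<lambda>j. rs g m j - g j) < e/2"
        using spec[OF N, of m] m l2norm_nonneg[OF l2_diff[OF rs_l2[of g m] K_l2[OF g]]] by simp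
      have b: "l2norm (\<lambda>j. rs g n j - g j) < e/2"
        using spec[OF N, of n] n l2norm_nonneg[OF l2_diff[OF rs_l2[of g n] K_l2[OF g]]] by simp
      show "l2norm (\<lambda>j. P m j - P n j) < e" unfolding dist using le a b by linarith
    qed
  qed
  define p where "p = (\<lambda>j. lim (\<lambda>k. P k j))"
  have pl2: "p \<in> l2" and plim: "(\<lambda>k. l2norm (\<lambda>j. P k j - p j)) \<longlonglongrightarrow> 0"
    using l2_complete[of P, OF K_l2[OF P(1)] cau] unfolding p_def by auto
  have pK: "p \<in> K" by (rule K_closed[OF P(1) pl2 plim])
  have "(\<lambda>k. l2norm (\<lambda>j. U1 (P k) j - U1 p j)) \<longlonglongrightarrow> 0"
  proof -
    have "l2norm (\<lambda>j. U1 (P k) j - U1 p j) = l2norm (\<lambda>j. P k j - p j)" for k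
      using U1_norm[OF K_diff[OF P(1) pK], of k] unfolding U1_diff[OF P(1) pK] .
    then show ?thesis using plim by simp
  qed
  then have "U1 p = g"
    using l2_limit_unique[OF K_l2[OF U1_K[OF P(1)]] K_l2[OF U1_K[OF pK]] K_l2[OF g]] tl
    unfolding P(2) by simp
  then show ?thesis using pK by blast
qed

lemma U1_image: "U1 ` K = K"
  using U1_K U1_onto by blast

lemma U1_unitary: "unitary_on K U1"
  unfolding unitary_on_def using U1_image U1_add U1_scaleC U1_norm by blast

definition U2 where "U2 f = inv_into K U1 (Z f)"

lemma U1_inj_on: "inj_on U1 K"
  using U1_inj by (meson inj_onI)

lemma U2_K: "f \<in> K \<Longrightarrow> U2 f \<in> K"
  unfolding U2_def by (rule inv_into_into) (simp add: U1_image Z_K)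

lemma U1_U2: "f \<in> K \<Longrightarrow> U1 (U2 f) = Z f"
  unfolding U2_def using f_inv_into_f[of "Z f" U1 K] by (simp add: U1_image Z_K)

lemma U2_U1: "p \<in> K \<Longrightarrow> U1 p = Z f \<Longrightarrow> U2 f = p"
  unfolding U2_def by (metis inv_into_f_f U1_inj_on)

lemma U2_unitary: "unitary_on K U2"
  unfolding unitary_on_def
proof (intro conjI ballI allI)
  show "U2 ` K = K"
  proof
    show "U2 ` K \<subseteq> K" using U2_K by blast
    show "K \<subseteq> U2 ` K"
    proof
      fix g assume g: "g \<in> K"
      have "U2 (Zi (U1 g)) = g" by (rule U2_U1[OF g]) (simp add: Z_Zi)
      moreover have "Zi (U1 g) \<in> K" by (intro Zi_K U1_K g)
      ultimately show "g \<in> U2 ` K" by (metis image_eqI)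
    qed
  qed
  fix f g assume f: "f \<in> K"
  show "l2norm (U2 f) = l2norm f" using U1_norm[OF U2_K[OF f]] U1_U2[OF f] Z_norm[OF f] by simp
  show "U2 (\<lambda>n. c *\<^sub>C f n) = (\<lambda>n. c *\<^sub>C U2 f n)" for c
    by (rule U2_U1[OF K_scaleC[OF U2_K[OF f]]]) (simp add: U1_scaleC U2_K f U1_U2 Z_scaleC)
  assume g: "g \<in> K"
  show "U2 (\<lambda>n. f n + g n) = (\<lambda>n. U2 f n + U2 g n)"
    by (rule U2_U1[OF K_add[OF U2_K[OF f] U2_K[OF g]]]) (simp add: U1_add U2_K f g U1_U2 Z_add)
qed

lemma Qb_unitary: "unitary_on K Qb"
  unfolding unitary_on_def
  using Qb_K Qb_onto Qb_add Qb_scaleC Qb_norm by blast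

lemma U2_emb: "U2 (emb h) = emb (V2 h)"
  by (rule U2_U1[OF emb_K]) (simp add: U1_emb Z_emb W_def)

lemma relation: "f \<in> K \<Longrightarrow> U2 (U1 f) = Qb (U1 (U2 f))"
proof -
  assume f: "f \<in> K"
  have "U2 (U1 f) = T f" by (rule U2_U1[OF T_K[OF f]]) (simp add: Z_U1 f)
  then show ?thesis by (simp add: U1_U2 f T_def)
qed

lemma U2_pow: "(U2 ^^ m) (emb h) = emb ((V2 ^^ m) h)"
  by (induction m) (simp_all add: U2_emb)

lemma U1_pow: "(U1 ^^ m) (emb h) = emb ((V1 ^^ m) h)"
  by (induction m) (simp_all add: U1_emb)

lemma projH_emb: "projH (emb x) = x" by (simp add: projH_def emb_def)

lemma main: "\<exists>(K :: (nat \<Rightarrow> 'h) set) Qb U1 U2.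
     closed_subspace_l2 K \<and> (\<forall>h. emb h \<in> K) \<and>
     unitary_on K Qb \<and> unitary_on K U1 \<and> unitary_on K U2 \<and>
     (\<forall>h. Qb (emb h) = emb (Q h)) \<and>
     (\<forall>f\<in>K. f 0 = 0 \<longrightarrow> Qb f = (\<lambda>n. q *\<^sub>C f n)) \<and>
     (\<forall>f\<in>K. f 0 = 0 \<longrightarrow> Qb f \<in> K \<and> Qb f 0 = 0) \<and>
     (\<forall>f\<in>K. U2 (U1 f) = Qb (U1 (U2 f))) \<and>
     (\<forall>h. U1 (emb h) = emb (V1 h)) \<and> (\<forall>h. U2 (emb h) = emb (V2 h)) \<and>
     (\<forall>n m h. (V1 ^^ n) ((V2 ^^ m) h) = projH ((U1 ^^ n) ((U2 ^^ m) (emb h)))) \<and>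
     (\<forall>n m h. (V2 ^^ n) ((V1 ^^ m) h) = projH ((U2 ^^ n) ((U1 ^^ m) (emb h))))"
proof (intro exI conjI allI ballI impI)
  show "closed_subspace_l2 K" by (rule closed_K)
  show "emb h \<in> K" for h by (rule emb_K)
  show "unitary_on K Qb" by (rule Qb_unitary)
  show "unitary_on K U1" by (rule U1_unitary)
  show "unitary_on K U2" by (rule U2_unitary)
  show "Qb (emb h) = emb (Q h)" for h by (rule Qb_emb)
  show "Qb f = (\<lambda>n. q *\<^sub>C f n)" if "f 0 = 0" for f
    unfolding Qb_def using that iso_zero[OF Q] by (intro ext) simp
  show "Qb f \<in> K" if "f \<in> K" for f by (rule Qb_K[OF that])
  show "Qb f 0 = 0" if "f 0 = 0" for f unfolding Qb_def using that iso_zero[OF Q] by simp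
  show "U2 (U1 f) = Qb (U1 (U2 f))" if "f \<in> K" for f by (rule relation[OF that])
  show "U1 (emb h) = emb (V1 h)" for h by (rule U1_emb)
  show "U2 (emb h) = emb (V2 h)" for h by (rule U2_emb)
  show "(V1 ^^ n) ((V2 ^^ m) h) = projH ((U1 ^^ n) ((U2 ^^ m) (emb h)))" for n m h
    by (simp add: U2_pow U1_pow projH_emb)
  show "(V2 ^^ n) ((V1 ^^ m) h) = projH ((U2 ^^ n) ((U1 ^^ m) (emb h)))" for n m h
    by (simp add: U2_pow U1_pow projH_emb)
qed

end

theorem mainTheorem11:
  fixes V1 V2 Q :: "'h::chilbert_space \<Rightarrow> 'h" and q :: complex
  assumes "isometry_op V1" and "isometry_op V2" and "unitary_op Q"
    and "\<And>x. V2 (V1 x) = Q (V1 (V2 x))"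
    and "norm q = 1"
  shows "\<exists>(K :: (nat \<Rightarrow> 'h) set) Qb U1 U2.
     closed_subspace_l2 K \<and> (\<forall>h. emb h \<in> K) \<and>
     unitary_on K Qb \<and> unitary_on K U1 \<and> unitary_on K U2 \<and>
     (\<forall>h. Qb (emb h) = emb (Q h)) \<and>
     (\<forall>f\<in>K. f 0 = 0 \<longrightarrow> Qb f = (\<lambda>n. q *\<^sub>C f n)) \<and>
     (\<forall>f\<in>K. f 0 = 0 \<longrightarrow> Qb f \<in> K \<and> Qb f 0 = 0) \<and>
     (\<forall>f\<in>K. U2 (U1 f) = Qb (U1 (U2 f))) \<and>
     (\<forall>h. U1 (emb h) = emb (V1 h)) \<and> (\<forall>h. U2 (emb h) = emb (V2 h)) \<and>
     (\<forall>n m h. (V1 ^^ n) ((V2 ^^ m) h) = projH ((U1 ^^ n) ((U2 ^^ m) (emb h)))) \<and>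
     (\<forall>n m h. (V2 ^^ n) ((V1 ^^ m) h) = projH ((U2 ^^ n) ((U1 ^^ m) (emb h))))"
proof -
  interpret dil V1 V2 Q q using assms by unfold_locales
  show ?thesis by (rule main)
qed


end
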